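(* With notation as in the context, for all $X,Y\in\zeta_s^+(V_0)$ and all $u\in V_0$, $$\int_{V_0}\gamma_X(u-v)\,\gamma_Y(v)\,e^{-\mathrm{i}\,\mathfrak{Im}\langle u,sv\rangle}\,d\mathrm{vol}(v)=\gamma_{X\circ Y}(u),$$ where $X\circ Y=(Y+s)(X+Y)^{-1}(X+s)-s$; the integral converges absolutely.
   Context: $V_0=V_0^+\oplus V_0^-$ is an orthogonal decomposition of a finite-dimensional complex Hermitian space with scalar product $\langle\cdot,\cdot\rangle$ (antilinear in the first argument), $s=\mathrm{Id}_{V_0^+}\oplus(-\mathrm{Id}_{V_0^-})$, $\zeta_s^+(V_0)=\{X\in\mathrm{End}(V_0):\tfrac12(X+X^\dagger)>0,\ \mathrm{Det}(X+s)\ne0\}$. For $X\in\zeta_s^+(V_0)$, $\gamma_X(v)=\mathrm{Det}(X+s)\,e^{-\frac12\langle v,Xv\rangle}$. $d\mathrm{vol}$ is Lebesgue measure on $V_0$ (viewed as a real vector space) normalized by $\int_{V_0}e^{-\frac12\langle v,v\rangle}d\mathrm{vol}(v)=1$. *)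

theory Defs
  imports "HOL-Analysis.Analysis"
begin

text \<open>The Hermitian space V_0 is modelled as complex^'n with the standard scalar product,
  antilinear in the first argument. The orthogonal decomposition V_0 = V_0^+ (+) V_0^- is
  given by a set P of coordinates spanning V_0^+ (the rest span V_0^-).\<close>

definition herm :: "complex^'n \<Rightarrow> complex^'n \<Rightarrow> complex" where
  "herm v w = (\<Sum>i\<in>UNIV. cnj (v $ i) * w $ i)"

definition adj :: "complex^'n^'n \<Rightarrow> complex^'n^'n" where
  "adj X = (\<chi> i j. cnj (X $ j $ i))"

definition sgnmat :: "'n set \<Rightarrow> complex^'n^'n" where
  "sgnmat P = (\<chi> i j. if i = j then (if i \<in> P then 1 else -1) else 0)"

definition posdef :: "complex^'n^'n \<Rightarrow> bool" where
  "posdef H \<longleftrightarrow> adj H = H \<and> (\<forall>v. v \<noteq> 0 \<longrightarrow> Im (herm v (H *v v)) = 0 \<and> Re (herm v (H *v v)) > 0)"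

definition zeta_plus :: "'n set \<Rightarrow> (complex^'n^'n) set" where
  "zeta_plus P = {X. posdef ((1/2) *\<^sub>R (X + adj X)) \<and> det (X + sgnmat P) \<noteq> 0}"

definition gammaX :: "'n set \<Rightarrow> complex^'n^'n \<Rightarrow> complex^'n \<Rightarrow> complex" where
  "gammaX P X v = det (X + sgnmat P) * exp (- (1/2) * herm v (X *v v))"

definition circ :: "'n set \<Rightarrow> complex^'n^'n \<Rightarrow> complex^'n^'n \<Rightarrow> complex^'n^'n" where
  "circ P X Y = (Y + sgnmat P) ** matrix_inv (X + Y) ** (X + sgnmat P) - sgnmat P"

text \<open>Normalisation constant of dvol: dvol = lborel / vol_norm, so that the integral of
  exp(-1/2 <v,v>) w.r.t. dvol equals 1.\<close>
definition vol_norm :: "'n::finite itself \<Rightarrow> complex" where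
  "vol_norm _ = (LINT v|(lborel :: (complex^'n) measure). exp (- (1/2) * herm v v))"

end

theory Submission
  imports Defs "HOL-Complex_Analysis.Complex_Analysis" "HOL-Probability.Probability"
begin

lemma gauss_real_hbi:
  fixes a b :: real assumes a: "a > 0"
  shows "has_bochner_integral lborel (\<lambda>x. exp (- a * x\<^sup>2 / 2 + b * x)) (sqrt (2*pi/a) * exp (b\<^sup>2/(2*a)))"
proof -
  have s: "0 < 1 / sqrt a" using a by simp
  have eq: "exp (- a * x\<^sup>2 / 2 + b * x) = (sqrt (2*pi/a) * exp (b\<^sup>2/(2*a))) * normal_density (b/a) (1 / sqrt a) x" for x
  proof -
    have "normal_density (b/a) (1 / sqrt a) x = 1 / sqrt (2*pi/a) * exp (-(x - b/a)\<^sup>2 * a / 2)"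
      using a by (simp add: normal_density_def power_divide real_sqrt_divide)
    moreover have "-(x - b/a)\<^sup>2 * a / 2 = (- a * x\<^sup>2 / 2 + b * x) - b\<^sup>2/(2*a)"
      using a by (simp add: field_simps power2_eq_square)
    ultimately show ?thesis using a by (simp add: exp_diff)
  qed
  have h1: "has_bochner_integral lborel (normal_density (b/a) (1/sqrt a)) 1"
    by (metis has_bochner_integral_iff integrable_normal_density integral_normal_density s)
  show ?thesis
    unfolding eq using has_bochner_integral_mult_right[OF h1, of "sqrt (2*pi/a) * exp (b\<^sup>2/(2*a))"] by simp
qed

lemma exp_partial_le:
  fixes x :: real assumes "0 \<le> x"
  shows "(\<Sum>n<N. x^n / fact n) \<le> exp x"
proof -
  have "(\<Sum>n<N. x^n / fact n) \<le> (\<Sum>n. x^n / fact n)"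
  proof (rule sum_le_suminf)
    show "summable (\<lambda>n. x^n / fact n)" using summable_exp[of x] by (simp add: divide_inverse mult.commute)
  qed (use assms in auto)
  also have "\<dots> = exp x" by (simp add: exp_def field_simps)
  finally show ?thesis .
qed

lemma ps_int:
  fixes g \<phi> :: "real \<Rightarrow> complex" and h :: complex and r :: real
  assumes gm[measurable]: "g \<in> borel_measurable borel" and pm[measurable]: "\<phi> \<in> borel_measurable borel"
    and int: "integrable lborel (\<lambda>x. norm (g x) * exp (r * norm (\<phi> x)))"
    and h: "norm h < r"
  shows "(\<lambda>n. ((LINT x|lborel. g x * \<phi> x ^ n) / fact n) * h ^ n) sums (LINT x|lborel. g x * exp (h * \<phi> x))"
proof -
  define s where "s N x = (\<Sum>n<N. g x * (h * \<phi> x)^n / fact n)" for N x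
  have sm[measurable]: "s N \<in> borel_measurable lborel" for N unfolding s_def by measurable
  have bnd1: "norm ((h * \<phi> x)^n / fact n) \<le> exp (r * norm (\<phi> x))" for x n
  proof -
    have "norm ((h * \<phi> x)^n / fact n) = (norm h * norm (\<phi> x))^n / fact n"
      by (simp add: norm_mult norm_power norm_divide norm_fact)
    also have "\<dots> \<le> exp (norm h * norm (\<phi> x))"
    proof -
      have "0 \<le> (\<Sum>k<n. (norm h * norm (\<phi> x))^k / fact k)" by (intro sum_nonneg) auto
      with exp_partial_le[of "norm h * norm (\<phi> x)" "Suc n"] show ?thesis by simp
    qed
    also have "\<dots> \<le> exp (r * norm (\<phi> x))"
      using h by (intro exp_mono mult_right_mono) auto
    finally show ?thesis .
  qed
  have bnd: "norm (s N x) \<le> norm (g x) * exp (r * norm (\<phi> x))" for N x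
  proof -
    have "norm (s N x) \<le> (\<Sum>n<N. norm (g x * (h * \<phi> x)^n / fact n))"
      unfolding s_def by (rule norm_sum)
    also have "\<dots> = norm (g x) * (\<Sum>n<N. (norm h * norm (\<phi> x))^n / fact n)"
      by (simp add: sum_distrib_left norm_mult norm_power norm_divide norm_fact)
    also have "\<dots> \<le> norm (g x) * exp (norm h * norm (\<phi> x))"
      by (intro mult_left_mono exp_partial_le) auto
    also have "\<dots> \<le> norm (g x) * exp (r * norm (\<phi> x))"
      using h by (intro mult_left_mono exp_mono mult_right_mono) auto
    finally show ?thesis .
  qed
  have lim: "(\<lambda>N. s N x) \<longlonglongrightarrow> g x * exp (h * \<phi> x)" for x
  proof -
    have "(\<lambda>n. (h * \<phi> x)^n /\<^sub>R fact n) sums exp (h * \<phi> x)" by (rule exp_converges)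
    then have "(\<lambda>n. g x * ((h * \<phi> x)^n /\<^sub>R fact n)) sums (g x * exp (h * \<phi> x))"
      by (rule sums_mult)
    then show ?thesis
      unfolding sums_def s_def by (simp add: scaleR_conv_of_real divide_inverse ac_simps)
  qed
  have "(\<lambda>N. integral\<^sup>L lborel (s N)) \<longlonglongrightarrow> (LINT x|lborel. g x * exp (h * \<phi> x))"
    by (rule integral_dominated_convergence[where w="\<lambda>x. norm (g x) * exp (r * norm (\<phi> x))"])
       (use int bnd lim in auto)
  moreover have "integral\<^sup>L lborel (s N) = (\<Sum>n<N. ((LINT x|lborel. g x * \<phi> x ^ n) / fact n) * h ^ n)" for N
  proof -
    have ti: "integrable lborel (\<lambda>x. g x * (h * \<phi> x)^n / fact n)" for n
    proof (rule Bochner_Integration.integrable_bound[OF int])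
      show "AE x in lborel. norm (g x * (h * \<phi> x) ^ n / fact n) \<le> norm (norm (g x) * exp (r * norm (\<phi> x)))"
      proof (intro AE_I2)
        fix x
        have "norm (g x * (h * \<phi> x) ^ n / fact n) = norm (g x) * norm ((h * \<phi> x) ^ n / fact n)"
          by (simp add: norm_mult norm_divide)
        also have "\<dots> \<le> norm (g x) * exp (r * norm (\<phi> x))"
          by (intro mult_left_mono bnd1) auto
        finally show "norm (g x * (h * \<phi> x) ^ n / fact n) \<le> norm (norm (g x) * exp (r * norm (\<phi> x)))"
          by simp
      qed
    qed measurable
    have "integral\<^sup>L lborel (s N) = (\<Sum>n<N. LINT x|lborel. g x * (h * \<phi> x)^n / fact n)"
      unfolding s_def using ti by (simp del: integral_mult_right_zero integral_divide_zero integral_mult_left_zero)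
    also have "\<dots> = (\<Sum>n<N. ((LINT x|lborel. g x * \<phi> x ^ n) / fact n) * h ^ n)"
    proof (rule sum.cong[OF refl])
      fix n
      have "(LINT x|lborel. g x * (h * \<phi> x)^n / fact n) = (LINT x|lborel. (h^n / fact n) * (g x * \<phi> x ^ n))"
        by (rule Bochner_Integration.integral_cong) (auto simp: power_mult_distrib field_simps)
      also have "\<dots> = ((LINT x|lborel. g x * \<phi> x ^ n) / fact n) * h ^ n"
        by simp
      finally show "(LINT x|lborel. g x * (h * \<phi> x)^n / fact n) = ((LINT x|lborel. g x * \<phi> x ^ n) / fact n) * h ^ n" .
    qed
    finally show ?thesis .
  qed
  ultimately show ?thesis unfolding sums_def by simp
qed

lemma ps_int_holo:
  fixes g \<phi> :: "real \<Rightarrow> complex" and z0 :: complex and r :: real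
  assumes gm[measurable]: "g \<in> borel_measurable borel" and pm[measurable]: "\<phi> \<in> borel_measurable borel"
    and int: "integrable lborel (\<lambda>x. norm (g x) * exp (r * norm (\<phi> x)))"
  shows "(\<lambda>z. LINT x|lborel. g x * exp ((z - z0) * \<phi> x)) holomorphic_on ball z0 r"
  by (rule power_series_holomorphic[where a="\<lambda>n. (LINT x|lborel. g x * \<phi> x ^ n) / fact n"])
     (rule ps_int[OF gm pm int], simp add: dist_norm norm_minus_commute)

definition gJ :: "complex \<Rightarrow> complex \<Rightarrow> real \<Rightarrow> complex" where
  "gJ a b x = exp (- a / 2 * (of_real x)\<^sup>2 + b * of_real x)"

lemma gJ_meas[measurable]: "gJ a b \<in> borel_measurable borel"
  unfolding gJ_def by measurable

lemma norm_gJ: "norm (gJ a b x) = exp (- Re a * x\<^sup>2 / 2 + Re b * x)"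
  unfolding gJ_def norm_exp_eq_Re by (simp add: power2_eq_square)

lemma integrable_gauss_real:
  fixes a b :: real assumes "a > 0"
  shows "integrable lborel (\<lambda>x. exp (- a * x\<^sup>2 / 2 + b * x))"
  using gauss_real_hbi[OF assms, of b] has_bochner_integral_iff by blast

lemma integrable_gJ: assumes "Re a > 0" shows "integrable lborel (gJ a b)"
proof (rule Bochner_Integration.integrable_bound[OF integrable_gauss_real[OF assms, of "Re b"]])
  show "AE x in lborel. norm (gJ a b x) \<le> norm (exp (- Re a * x\<^sup>2 / 2 + Re b * x))"
    by (simp add: norm_gJ)
qed measurable

lemma ident_real:
  fixes f g :: "complex \<Rightarrow> complex"
  assumes hf: "f holomorphic_on ball 0 R" and hg: "g holomorphic_on ball 0 R"
    and eq: "\<And>t::real. \<bar>t\<bar> < R \<Longrightarrow> f (of_real t) = g (of_real t)" and z: "z \<in> ball 0 R"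
  shows "f z = g z"
proof -
  have R: "R > 0" using z by (simp add: dist_norm) (meson norm_ge_zero order.strict_trans1)
  let ?U = "{of_real t | t. \<bar>t\<bar> < R} :: complex set"
  have lim: "0 islimpt ?U"
  proof (rule islimptI)
    fix T :: "complex set" assume "0 \<in> T" "open T"
    then obtain e where e: "e > 0" "ball 0 e \<subseteq> T" by (meson openE)
    define t where "t = min e R / 2"
    have t: "t > 0" "t < e" "t < R" using e R by (auto simp: t_def)
    show "\<exists>y\<in>?U. y \<in> T \<and> y \<noteq> 0"
      using t e by (intro bexI[of _ "of_real t"]) (auto simp: dist_norm)
  qed
  have "f z - g z = 0"
  proof (rule analytic_continuation[where f="\<lambda>z. f z - g z" and S="ball 0 R" and U="?U" and \<xi>=0])
    show "(\<lambda>z. f z - g z) holomorphic_on ball 0 R" using hf hg by (intro holomorphic_intros)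
  qed (use eq z R lim in \<open>auto simp: dist_norm\<close>)
  then show ?thesis by simp
qed

lemma int_exp_abs:
  fixes a c :: real assumes "a > 0"
  shows "integrable lborel (\<lambda>x. exp (- a * x\<^sup>2 / 2 + c * x) * exp (r * \<bar>x\<bar>))"
proof (rule Bochner_Integration.integrable_bound)
  show "integrable lborel (\<lambda>x. exp (- a * x\<^sup>2 / 2 + (c + r) * x) + exp (- a * x\<^sup>2 / 2 + (c - r) * x))"
    using integrable_gauss_real[OF assms] by (intro Bochner_Integration.integrable_add) auto
  show "AE x in lborel. norm (exp (- a * x\<^sup>2 / 2 + c * x) * exp (r * \<bar>x\<bar>))
     \<le> norm (exp (- a * x\<^sup>2 / 2 + (c + r) * x) + exp (- a * x\<^sup>2 / 2 + (c - r) * x))"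
  proof (intro AE_I2)
    fix x :: real
    have "exp (- a * x\<^sup>2 / 2 + c * x) * exp (r * \<bar>x\<bar>) = exp (- a * x\<^sup>2 / 2 + c * x + r * \<bar>x\<bar>)"
      by (simp add: exp_add)
    also have "\<dots> \<le> exp (- a * x\<^sup>2 / 2 + (c + r) * x) + exp (- a * x\<^sup>2 / 2 + (c - r) * x)"
      by (cases "x \<ge> 0") (auto simp: algebra_simps add_increasing add_increasing2)
    finally show "norm (exp (- a * x\<^sup>2 / 2 + c * x) * exp (r * \<bar>x\<bar>))
     \<le> norm (exp (- a * x\<^sup>2 / 2 + (c + r) * x) + exp (- a * x\<^sup>2 / 2 + (c - r) * x))" by simp
  qed
qed measurable

lemma JR:
  fixes a :: real and b :: complex assumes a: "a > 0"
  shows "(LINT x|lborel. gJ (of_real a) b x) = sqrt (2*pi/a) * exp (b\<^sup>2/(2*a))"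
proof -
  define R where "R = norm b + 1"
  have hol: "(\<lambda>b. LINT x|lborel. gJ (of_real a) b x) holomorphic_on ball 0 R"
  proof -
    have "(\<lambda>z. LINT x|lborel. gJ (of_real a) 0 x * exp ((z - 0) * of_real x)) holomorphic_on ball 0 R"
    proof (rule ps_int_holo)
      show "integrable lborel (\<lambda>x. norm (gJ (of_real a) 0 x) * exp (R * norm (complex_of_real x)))"
        using int_exp_abs[OF a, of 0 R] by (simp add: norm_gJ)
    qed measurable
    moreover have "gJ (of_real a) 0 x * exp ((z - 0) * of_real x) = gJ (of_real a) z x" for z x
      by (simp add: gJ_def exp_add[symmetric])
    ultimately show ?thesis by simp
  qed
  have hol2: "(\<lambda>b. sqrt (2*pi/a) * exp (b\<^sup>2/(2*a))) holomorphic_on ball 0 R"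
    using a by (intro holomorphic_intros) auto
  have eqt: "(LINT x|lborel. gJ (of_real a) (of_real t) x) = sqrt (2*pi/a) * exp ((of_real t)\<^sup>2/(2*a))" for t
  proof -
    have "gJ (of_real a) (of_real t) x = of_real (exp (- a * x\<^sup>2 / 2 + t * x))" for x
      by (simp add: gJ_def exp_of_real[symmetric] algebra_simps)
    then have "(LINT x|lborel. gJ (of_real a) (of_real t) x) = of_real (LINT x|lborel. exp (- a * x\<^sup>2 / 2 + t * x))"
      by simp
    also have "\<dots> = of_real (sqrt (2*pi/a) * exp (t\<^sup>2/(2*a)))"
      using gauss_real_hbi[OF a, of t] by (simp add: has_bochner_integral_integral_eq)
    finally show ?thesis by simp
  qed
  show ?thesis by (rule ident_real[OF hol hol2]) (use eqt in \<open>auto simp: R_def exp_of_real[symmetric]\<close>)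
qed

definition Jf :: "complex \<Rightarrow> complex \<Rightarrow> complex" where
  "Jf a b = (LINT x|lborel. gJ a b x)"

lemma Jf_holo: "(\<lambda>a. Jf a b) holomorphic_on {a. Re a > 0}"
proof -
  let ?I = "{p :: real \<times> real. 0 < snd p \<and> snd p < fst p}"
  let ?A = "\<lambda>p. ball (complex_of_real (fst p)) (snd p)"
  have "(\<lambda>a. Jf a b) holomorphic_on (\<Union>p\<in>?I. ?A p)"
  proof (rule holomorphic_on_UN_open)
    fix p assume p: "p \<in> ?I"
    obtain a0 r where pr: "p = (a0, r)" "0 < r" "r < a0" using p by (cases p) auto
    have "(\<lambda>z. LINT x|lborel. gJ (of_real a0) b x * exp ((z - of_real a0) * (- (of_real x)\<^sup>2 / 2))) holomorphic_on ball (of_real a0) r"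
    proof (rule ps_int_holo)
      have "norm (gJ (of_real a0) b x) * exp (r * norm (- (complex_of_real x)\<^sup>2 / 2)) = exp (- (a0 - r) * x\<^sup>2 / 2 + Re b * x)" for x
        by (simp add: norm_gJ norm_power norm_divide exp_add[symmetric] algebra_simps) (simp add: field_simps)
      then show "integrable lborel (\<lambda>x. norm (gJ (of_real a0) b x) * exp (r * norm (- (complex_of_real x)\<^sup>2 / 2)))"
        using integrable_gauss_real[of "a0 - r" "Re b"] pr by simp
    qed measurable
    moreover have "gJ (of_real a0) b x * exp ((z - of_real a0) * (- (of_real x)\<^sup>2 / 2)) = gJ z b x" for z x
      unfolding gJ_def exp_add[symmetric] by (rule arg_cong[where f=exp]) (simp add: field_simps)
    ultimately show "(\<lambda>a. Jf a b) holomorphic_on ?A p" by (simp add: Jf_def pr)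
  qed auto
  moreover have "{a. Re a > 0} \<subseteq> (\<Union>p\<in>?I. ?A p)"
  proof
    fix a :: complex assume "a \<in> {a. Re a > 0}"
    then have ra: "Re a > 0" by simp
    define a0 where "a0 = (cmod a)\<^sup>2 / Re a"
    have na: "(cmod a)\<^sup>2 = (Re a)\<^sup>2 + (Im a)\<^sup>2" by (simp add: cmod_power2)
    have "a \<noteq> 0" using ra by auto
    then have a0p: "a0 > 0" using ra by (auto simp: a0_def intro!: divide_pos_pos)
    have "(cmod (a - of_real a0))\<^sup>2 = (Re a - a0)\<^sup>2 + (Im a)\<^sup>2" by (simp add: cmod_power2)
    also have "\<dots> = a0\<^sup>2 - (cmod a)\<^sup>2"
      using ra unfolding a0_def na by (simp add: field_simps power2_eq_square)
    also have "\<dots> < a0\<^sup>2" using \<open>a \<noteq> 0\<close> by simp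
    finally have lt: "cmod (a - of_real a0) < a0"
      using a0p by (meson power_less_imp_less_base less_imp_le)
    define r where "r = (cmod (a - of_real a0) + a0) / 2"
    have r1: "0 < r" unfolding r_def using a0p by (simp add: field_simps add_pos_nonneg)
    have r2: "r < a0" unfolding r_def using lt by (simp add: field_simps)
    have "(a0, r) \<in> ?I" using r1 r2 by simp
    moreover have "a \<in> ?A (a0, r)" using lt by (auto simp: r_def dist_norm norm_minus_commute)
    ultimately show "a \<in> (\<Union>p\<in>?I. ?A p)" by blast
  qed
  ultimately show ?thesis by (rule holomorphic_on_subset)
qed

lemma ident_pos:
  fixes f g :: "complex \<Rightarrow> complex"
  assumes hf: "f holomorphic_on {a. Re a > 0}" and hg: "g holomorphic_on {a. Re a > 0}"
    and eq: "\<And>t::real. t > 0 \<Longrightarrow> f (of_real t) = g (of_real t)" and z: "Re z > 0"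
  shows "f z = g z"
proof -
  let ?U = "{of_real t | t. t > 0} :: complex set"
  have lim: "1 islimpt ?U"
  proof (rule islimptI)
    fix T :: "complex set" assume "1 \<in> T" "open T"
    then obtain e where e: "e > 0" "ball 1 e \<subseteq> T" by (meson openE)
    define t where "t = min e 1 / 2"
    have t: "t > 0" "t < e" "t < 1" using e by (auto simp: t_def)
    show "\<exists>y\<in>?U. y \<in> T \<and> y \<noteq> 1"
      using t e by (intro bexI[of _ "of_real (1 + t)"]) (auto simp: dist_norm intro!: exI[of _ "1 + t"])
  qed
  have "f z - g z = 0"
  proof (rule analytic_continuation[where f="\<lambda>z. f z - g z" and S="{a. Re a > 0}" and U="?U" and \<xi>=1])
    show "(\<lambda>z. f z - g z) holomorphic_on {a. Re a > 0}" using hf hg by (intro holomorphic_intros)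
  qed (use eq z lim in \<open>auto simp: open_halfspace_Re_gt\<close>)
  then show ?thesis by simp
qed

lemma JC_real:
  fixes b c :: complex and t :: real
  assumes t: "t > 0"
  shows "Jf (of_real t) b * Jf (of_real t) c = 2 * pi / of_real t * exp ((b\<^sup>2 + c\<^sup>2) / (2 * of_real t))"
proof -
  have sq: "sqrt (2*pi/t) * sqrt (2*pi/t) = 2*pi/t" using t by (simp add: real_sqrt_mult_self)
  have sqc: "complex_of_real (sqrt (2*pi/t)) * complex_of_real (sqrt (2*pi/t)) = complex_of_real (2*pi/t)"
    by (simp only: of_real_mult[symmetric] sq)
  have "Jf (of_real t) b * Jf (of_real t) c = (complex_of_real (sqrt (2*pi/t)) * complex_of_real (sqrt (2*pi/t))) * (exp (b\<^sup>2/(2*t)) * exp (c\<^sup>2/(2*t)))"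
    unfolding Jf_def JR[OF t] by (simp only: ac_simps)
  also have "\<dots> = 2 * pi / t * exp ((b\<^sup>2 + c\<^sup>2) / (2 * t))"
    unfolding sqc by (simp add: exp_add[symmetric] add_divide_distrib)
  finally show ?thesis by simp
qed

lemma JC:
  fixes a b c :: complex
  assumes a: "Re a > 0"
  shows "Jf a b * Jf a c = 2 * pi / a * exp ((b\<^sup>2 + c\<^sup>2) / (2 * a))"
proof (rule ident_pos[where f="\<lambda>a. Jf a b * Jf a c" and g="\<lambda>a. 2 * pi / a * exp ((b\<^sup>2 + c\<^sup>2) / (2 * a))", OF _ _ _ a])
  show "(\<lambda>a. Jf a b * Jf a c) holomorphic_on {a. Re a > 0}"
    using Jf_holo by (intro holomorphic_intros)
  show "(\<lambda>a. 2 * pi / a * exp ((b\<^sup>2 + c\<^sup>2) / (2 * a))) holomorphic_on {a. Re a > 0}"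
    by (intro holomorphic_intros) auto
qed (simp add: JC_real)

interpretation lbp: product_sigma_finite "\<lambda>_. lborel :: 'a::euclidean_space measure"
  by unfold_locales

lemma cnj_measurable[measurable]: "cnj \<in> borel_measurable borel"
  by (intro borel_measurable_continuous_onI continuous_intros)

lemma lborel_complex_eq:
  "(lborel :: complex measure) = distr (\<Pi>\<^sub>M b\<in>Basis. lborel) borel (\<lambda>f. of_real (f 1) + \<i> * of_real (f \<i>))"
proof -
  have "(\<lambda>f. \<Sum>b\<in>(Basis::complex set). f b *\<^sub>R b) = (\<lambda>f. of_real (f 1) + \<i> * of_real (f \<i>))"
    by (auto simp: Basis_complex_def scaleR_conv_of_real)
  then show ?thesis using lborel_eq[where 'a=complex] by simp
qed

lemma G1:
  fixes a p q :: complex assumes a: "Re a > 0"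
  shows "integrable lborel (\<lambda>t::complex. exp (- a * (cnj t * t) + p * t + q * cnj t))"
    and "(LINT t|lborel. exp (- a * (cnj t * t) + p * t + q * cnj t)) = pi / a * exp (p * q / a)"
proof -
  define F where "F t = exp (- a * (cnj t * t) + p * t + q * cnj t)" for t :: complex
  define T where "T f = of_real (f 1) + \<i> * of_real (f \<i>)" for f :: "complex \<Rightarrow> real"
  define h where "h b x = (if b = 1 then gJ (2*a) (p+q) x else gJ (2*a) (\<i>*(p-q)) x)" for b :: complex and x :: real
  have Tm[measurable]: "T \<in> borel_measurable (\<Pi>\<^sub>M b\<in>Basis. lborel)"
    unfolding T_def by measurable
  have Fm[measurable]: "F \<in> borel_measurable borel" unfolding F_def by measurable
  have a2: "Re (2*a) > 0" using a by simp
  have hi: "integrable lborel (h b)" for b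
  proof -
    have "h b = (if b = 1 then gJ (2*a) (p+q) else gJ (2*a) (\<i>*(p-q)))" by (auto simp: h_def fun_eq_iff)
    then show ?thesis by (simp add: integrable_gJ[OF a2])
  qed
  have eqF: "F (T f) = (\<Prod>b\<in>Basis. h b (f b))" for f
  proof -
    have "(\<Prod>b\<in>Basis. h b (f b)) = gJ (2*a) (p+q) (f 1) * gJ (2*a) (\<i>*(p-q)) (f \<i>)"
      by (simp add: Basis_complex_def h_def)
    also have "\<dots> = F (T f)"
      unfolding gJ_def F_def T_def exp_add[symmetric]
      by (rule arg_cong[where f=exp]) (simp add: algebra_simps power2_eq_square)
    finally show ?thesis by simp
  qed
  have L: "lborel = distr (\<Pi>\<^sub>M b\<in>Basis. lborel) borel T"
    unfolding T_def by (rule lborel_complex_eq)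
  have int: "integrable (\<Pi>\<^sub>M b\<in>(Basis::complex set). lborel) (\<lambda>f. \<Prod>b\<in>Basis. h b (f b))"
    by (rule lbp.product_integrable_prod) (auto simp: hi)
  then have "integrable (\<Pi>\<^sub>M b\<in>(Basis::complex set). lborel) (\<lambda>f. F (T f))"
    by (simp add: eqF)
  then show "integrable lborel (\<lambda>t::complex. exp (- a * (cnj t * t) + p * t + q * cnj t))"
    unfolding F_def[symmetric] by (subst L) (simp add: integrable_distr_eq)
  have "(LINT t|lborel. F t) = (LINT f|(\<Pi>\<^sub>M b\<in>(Basis::complex set). lborel). F (T f))"
    by (subst L) (simp add: integral_distr)
  also have "\<dots> = (\<Prod>b\<in>(Basis::complex set). LINT x|lborel. h b x)"
    unfolding eqF by (rule lbp.product_integral_prod) (auto simp: hi)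
  also have "\<dots> = Jf (2*a) (p+q) * Jf (2*a) (\<i>*(p-q))"
    by (simp add: Basis_complex_def h_def Jf_def)
  also have "\<dots> = 2 * pi / (2*a) * exp (((p+q)\<^sup>2 + (\<i>*(p-q))\<^sup>2) / (2 * (2*a)))"
    by (rule JC[OF a2])
  also have "\<dots> = pi / a * exp (p * q / a)"
    using a by (auto simp: power2_eq_square field_simps intro!: arg_cong[where f=exp])
  finally show "(LINT t|lborel. exp (- a * (cnj t * t) + p * t + q * cnj t)) = pi / a * exp (p * q / a)"
    by (simp add: F_def)
qed

definition QF :: "'n set \<Rightarrow> ('n \<Rightarrow> 'n \<Rightarrow> complex) \<Rightarrow> ('n \<Rightarrow> complex) \<Rightarrow> complex" where
  "QF I A v = (\<Sum>i\<in>I. \<Sum>j\<in>I. cnj (v i) * A i j * v j)"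

definition LF :: "'n set \<Rightarrow> ('n \<Rightarrow> complex) \<Rightarrow> ('n \<Rightarrow> complex) \<Rightarrow> complex" where
  "LF I w v = (\<Sum>i\<in>I. cnj (w i) * v i)"

definition gi :: "'n set \<Rightarrow> ('n \<Rightarrow> 'n \<Rightarrow> complex) \<Rightarrow> ('n \<Rightarrow> complex) \<Rightarrow> ('n \<Rightarrow> complex) \<Rightarrow> ('n \<Rightarrow> complex) \<Rightarrow> complex" where
  "gi I A p q v = exp (- QF I A v + LF I p v + LF I v q)"

definition posH :: "'n set \<Rightarrow> ('n \<Rightarrow> 'n \<Rightarrow> complex) \<Rightarrow> bool" where
  "posH I A \<longleftrightarrow> (\<forall>v. (\<exists>i\<in>I. v i \<noteq> 0) \<longrightarrow> Re (QF I A v) > 0)"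

definition schur :: "('n \<Rightarrow> 'n \<Rightarrow> complex) \<Rightarrow> 'n \<Rightarrow> ('n \<Rightarrow> 'n \<Rightarrow> complex)" where
  "schur A k = (\<lambda>i j. A i j - A i k * A k j / A k k)"

definition hp :: "('n \<Rightarrow> 'n \<Rightarrow> complex) \<Rightarrow> ('n \<Rightarrow> 'n \<Rightarrow> complex)" where
  "hp A = (\<lambda>i j. (A i j + cnj (A j i)) / 2)"

lemma QF_insert0:
  assumes "finite I" "k \<notin> I"
  shows "QF (insert k I) A w = A k k * (cnj (w k) * w k) + cnj (w k) * (\<Sum>j\<in>I. A k j * w j)
     + (\<Sum>i\<in>I. cnj (w i) * A i k) * w k + QF I A w"
  using assms unfolding QF_def
  by (simp add: sum.insert sum.distrib sum_distrib_left sum_distrib_right algebra_simps)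

lemma QF_cong: "(\<And>i. i \<in> I \<Longrightarrow> v i = w i) \<Longrightarrow> QF I A v = QF I A w"
  unfolding QF_def by (intro sum.cong refl) auto

lemma LF_cong1: "(\<And>i. i \<in> I \<Longrightarrow> v i = w i) \<Longrightarrow> LF I p v = LF I p w"
  unfolding LF_def by (intro sum.cong refl) auto

lemma LF_cong2: "(\<And>i. i \<in> I \<Longrightarrow> v i = w i) \<Longrightarrow> LF I v q = LF I w q"
  unfolding LF_def by (intro sum.cong refl) auto

lemma QF_insert:
  assumes "finite I" "k \<notin> I"
  shows "QF (insert k I) A (v(k:=t)) = A k k * (cnj t * t) + cnj t * (\<Sum>j\<in>I. A k j * v j)
     + (\<Sum>i\<in>I. cnj (v i) * A i k) * t + QF I A v"
proof -
  have e: "\<And>j. j \<in> I \<Longrightarrow> (v(k:=t)) j = v j" using assms by auto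
  have 1: "(\<Sum>j\<in>I. A k j * (v(k:=t)) j) = (\<Sum>j\<in>I. A k j * v j)" using assms by (intro sum.cong refl) auto
  have 2: "(\<Sum>i\<in>I. cnj ((v(k:=t)) i) * A i k) = (\<Sum>i\<in>I. cnj (v i) * A i k)" using assms by (intro sum.cong refl) auto
  have 3: "QF I A (v(k:=t)) = QF I A v" using assms by (intro QF_cong) auto
  show ?thesis unfolding QF_insert0[OF assms] 1 2 3 by simp
qed

lemma LF_insert1:
  assumes "finite I" "k \<notin> I"
  shows "LF (insert k I) p (v(k:=t)) = cnj (p k) * t + LF I p v"
  using assms unfolding LF_def by (simp add: sum.insert) (intro sum.cong, auto)

lemma LF_insert2:
  assumes "finite I" "k \<notin> I"
  shows "LF (insert k I) (v(k:=t)) q = cnj t * q k + LF I v q"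
  using assms unfolding LF_def by (simp add: sum.insert) (intro sum.cong, auto)

lemma QF_schur:
  "QF I (schur A k) v = QF I A v - (\<Sum>i\<in>I. cnj (v i) * A i k) * (\<Sum>j\<in>I. A k j * v j) / A k k"
proof -
  have 1: "(\<Sum>i\<in>I. cnj (v i) * A i k) * (\<Sum>j\<in>I. A k j * v j) = (\<Sum>i\<in>I. \<Sum>j\<in>I. cnj (v i) * A i k * (A k j * v j))"
    by (rule sum_product)
  have "QF I (schur A k) v = (\<Sum>i\<in>I. \<Sum>j\<in>I. cnj (v i) * A i j * v j - cnj (v i) * A i k * (A k j * v j) / A k k)"
    unfolding QF_def schur_def by (intro sum.cong refl) (simp add: ring_distribs)
  also have "\<dots> = QF I A v - (\<Sum>i\<in>I. \<Sum>j\<in>I. cnj (v i) * A i k * (A k j * v j)) / A k k"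
    unfolding QF_def by (simp add: sum_subtractf sum_divide_distrib)
  finally show ?thesis unfolding 1 .
qed

lemma QF_hp: "QF I (hp A) w = of_real (Re (QF I A w))"
proof -
  have c: "cnj (QF I A w) = (\<Sum>i\<in>I. \<Sum>j\<in>I. cnj (w i) * cnj (A j i) * w j)"
  proof -
    have "cnj (QF I A w) = (\<Sum>j\<in>I. \<Sum>i\<in>I. cnj (w i) * cnj (A j i) * w j)"
      unfolding QF_def by (simp add: ac_simps)
    also have "\<dots> = (\<Sum>i\<in>I. \<Sum>j\<in>I. cnj (w i) * cnj (A j i) * w j)"
      by (rule sum.swap)
    finally show ?thesis .
  qed
  have "QF I (hp A) w = (QF I A w + cnj (QF I A w)) / 2"
    unfolding c unfolding QF_def hp_def
    by (simp add: sum.distrib[symmetric] sum_divide_distrib ring_distribs add_divide_distrib)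
  also have "\<dots> = of_real (Re (QF I A w))" by (simp add: complex_add_cnj)
  finally show ?thesis .
qed

lemma LF_cnj: "LF I w v = cnj (LF I v w)"
  unfolding LF_def by (simp add: mult.commute)

lemma LF_hp: "LF I (\<lambda>i. (p i + q i) / 2) w + LF I w (\<lambda>i. (p i + q i) / 2) = of_real (Re (LF I p w + LF I w q))"
proof -
  let ?m = "\<lambda>i. (p i + q i) / 2"
  have 1: "LF I ?m w = (LF I p w + LF I q w) / 2"
    unfolding LF_def by (simp add: sum.distrib[symmetric] sum_divide_distrib ring_distribs add_divide_distrib)
  have "LF I ?m w + LF I w ?m = LF I ?m w + cnj (LF I ?m w)" by (simp add: LF_cnj[of I w])
  also have "\<dots> = of_real (2 * Re (LF I ?m w))" by (rule complex_add_cnj)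
  also have "\<dots> = of_real (Re (LF I p w + LF I w q))"
    unfolding 1 by (simp add: LF_cnj[of I w q])
  finally show ?thesis .
qed

lemma gi_hp:
  "gi I (hp A) (\<lambda>i. (p i + q i) / 2) (\<lambda>i. (p i + q i) / 2) w = of_real (norm (gi I A p q w))"
proof -
  have "- QF I (hp A) w + LF I (\<lambda>i. (p i + q i) / 2) w + LF I w (\<lambda>i. (p i + q i) / 2)
      = of_real (Re (- QF I A w + LF I p w + LF I w q))"
    using LF_hp[of I p q w] unfolding QF_hp by simp
  then have "gi I (hp A) (\<lambda>i. (p i + q i) / 2) (\<lambda>i. (p i + q i) / 2) w = exp (of_real (Re (- QF I A w + LF I p w + LF I w q)))"
    unfolding gi_def by simp
  also have "\<dots> = of_real (exp (Re (- QF I A w + LF I p w + LF I w q)))" by (rule exp_of_real)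
  also have "exp (Re (- QF I A w + LF I p w + LF I w q)) = norm (gi I A p q w)"
    unfolding gi_def by (rule norm_exp_eq_Re[symmetric])
  finally show ?thesis .
qed

lemma posH_hp: "posH I (hp A) \<longleftrightarrow> posH I A"
  unfolding posH_def QF_hp by simp

lemma gi_split:
  assumes "finite I" "k \<notin> I"
  shows "gi (insert k I) A p q (v(k:=t)) =
    exp (- A k k * (cnj t * t) + (cnj (p k) - (\<Sum>i\<in>I. cnj (v i) * A i k)) * t + (q k - (\<Sum>j\<in>I. A k j * v j)) * cnj t)
    * gi I A p q v"
  unfolding gi_def QF_insert[OF assms] LF_insert1[OF assms] LF_insert2[OF assms] exp_add[symmetric]
  by (rule arg_cong[where f=exp]) (simp add: algebra_simps)

lemma LF_p':
  assumes "A k k \<noteq> 0"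
  shows "LF I (\<lambda>j. p j - cnj (A k j) * p k / cnj (A k k)) v = LF I p v - cnj (p k) / A k k * (\<Sum>j\<in>I. A k j * v j)"
  unfolding LF_def by (simp add: sum_subtractf sum_distrib_left ring_distribs mult.commute mult.left_commute)

lemma LF_q':
  shows "LF I v (\<lambda>i. q i - A i k * q k / A k k) = LF I v q - q k / A k k * (\<Sum>i\<in>I. cnj (v i) * A i k)"
  unfolding LF_def by (simp add: sum_subtractf sum_distrib_left ring_distribs mult.commute mult.left_commute)

lemma alg1:
  fixes a cp qk X Y Qv Lp Lq :: complex
  assumes "a \<noteq> 0"
  shows "(cp - X) * (qk - Y) / a + (- Qv + Lp + Lq) = cp * qk / a + (- (Qv - X * Y / a) + (Lp - cp / a * Y) + (Lq - qk / a * X))"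
  using assms by (simp add: field_simps)
lemma alg2:
  fixes a c X Y Q :: complex
  assumes "a \<noteq> 0"
  shows "a * (c * (- Y / a)) + c * Y + X * (- Y / a) + Q = Q - X * Y / a"
  using assms by (simp add: field_simps)
lemma gi_step:
  assumes a: "A k k \<noteq> 0"
  shows "exp ((cnj (p k) - (\<Sum>i\<in>I. cnj (v i) * A i k)) * (q k - (\<Sum>j\<in>I. A k j * v j)) / A k k) * gi I A p q v
     = exp (cnj (p k) * q k / A k k) *
       gi I (schur A k) (\<lambda>j. p j - cnj (A k j) * p k / cnj (A k k)) (\<lambda>i. q i - A i k * q k / A k k) v"
  unfolding gi_def exp_add[symmetric] QF_schur LF_p'[of A k, OF a] LF_q'
  by (rule arg_cong[where f=exp], rule alg1[OF a])

lemma posH_diag: assumes fin: "finite I" and P: "posH I A" and k: "k \<in> I" shows "Re (A k k) > 0"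
proof -
  define e where "e = (\<lambda>i. if i = k then 1 else 0 :: complex)"
  have "\<exists>i\<in>I. e i \<noteq> 0" using k by (auto simp: e_def)
  then have "Re (QF I A e) > 0"
    using P unfolding posH_def by blast
  moreover have "QF I A e = A k k"
  proof -
    have inner: "(\<Sum>j\<in>I. cnj (e i) * A i j * e j) = cnj (e i) * A i k" for i
    proof -
      have "(\<Sum>j\<in>I. cnj (e i) * A i j * e j) = (\<Sum>j\<in>I. if j = k then cnj (e i) * A i k else 0)"
        by (intro sum.cong refl) (auto simp: e_def)
      also have "\<dots> = cnj (e i) * A i k" using fin k by (simp add: sum.delta)
      finally show ?thesis .
    qed
    have "QF I A e = (\<Sum>i\<in>I. cnj (e i) * A i k)" unfolding QF_def inner ..
    also have "\<dots> = (\<Sum>i\<in>I. if i = k then A k k else 0)"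
      by (intro sum.cong refl) (auto simp: e_def)
    also have "\<dots> = A k k" using fin k by (simp add: sum.delta)
    finally show ?thesis .
  qed
  ultimately show ?thesis by simp
qed

lemma posH_schur:
  assumes fin: "finite I" and k: "k \<notin> I" and P: "posH (insert k I) A"
  shows "posH I (schur A k)"
  unfolding posH_def
proof (intro allI impI)
  fix v :: "'a \<Rightarrow> complex" assume nz: "\<exists>i\<in>I. v i \<noteq> 0"
  have "Re (A k k) > 0" using posH_diag[OF _ P] fin by simp
  then have a: "A k k \<noteq> 0" by auto
  define t where "t = - (\<Sum>j\<in>I. A k j * v j) / A k k"
  have "QF (insert k I) A (v(k:=t)) = QF I (schur A k) v"
    unfolding QF_insert[OF fin k] QF_schur t_def by (rule alg2[OF a])
  moreover have nz': "\<exists>i\<in>insert k I. (v(k:=t)) i \<noteq> 0" using nz k by auto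
  have "Re (QF (insert k I) A (v(k:=t))) > 0" using P nz' unfolding posH_def by blast
  ultimately show "Re (QF I (schur A k) v) > 0" by simp
qed

abbreviation MI :: "'n set \<Rightarrow> ('n \<Rightarrow> complex) measure" where
  "MI I \<equiv> PiM I (\<lambda>_. lborel :: complex measure)"

lemma gi_meas: assumes "I \<subseteq> J" shows "gi I A p q \<in> borel_measurable (MI J)"
proof -
  have c[measurable]: "(\<lambda>v. v i) \<in> borel_measurable (MI J)" if "i \<in> I" for i
    using measurable_component_singleton[of i J "\<lambda>_. lborel :: complex measure"] that assms by auto
  show ?thesis unfolding gi_def QF_def LF_def by measurable
qed

lemma nn_norm_integral:
  fixes f :: "'a \<Rightarrow> complex" and g :: "'a \<Rightarrow> real"
  assumes f: "integrable M f" and fg: "\<And>x. f x = of_real (g x)" and g0: "\<And>x. g x \<ge> 0"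
  shows "(\<integral>\<^sup>+x. ennreal (norm (f x)) \<partial>M) = ennreal (norm (integral\<^sup>L M f))"
proof -
  have "f = (\<lambda>x. of_real (g x))" using fg by auto
  with f have gi: "integrable M g" using complex_of_real_integrable_eq by auto
  have "(\<integral>\<^sup>+x. ennreal (norm (f x)) \<partial>M) = (\<integral>\<^sup>+x. ennreal (g x) \<partial>M)"
    using fg g0 by (intro nn_integral_cong) simp
  also have "\<dots> = ennreal (integral\<^sup>L M g)"
    by (rule nn_integral_eq_integral[OF gi]) (simp add: g0)
  also have "integral\<^sup>L M g = norm (integral\<^sup>L M f)"
    using \<open>f = _\<close> g0 by (simp add: integral_nonneg)
  finally show ?thesis .
qed

lemma gi_empty: "gi {} A p q v = 1"
  by (simp add: gi_def QF_def LF_def)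

lemma inner_gauss:
  fixes A :: "'n \<Rightarrow> 'n \<Rightarrow> complex" and p q v :: "'n \<Rightarrow> complex"
  assumes fin: "finite I" and k: "k \<notin> I" and a: "Re (A k k) > 0"
  shows "integrable lborel (\<lambda>t. gi (insert k I) A p q (v(k:=t)))"
    and "(LINT t|lborel. gi (insert k I) A p q (v(k:=t))) =
         pi / A k k * exp (cnj (p k) * q k / A k k) *
         gi I (schur A k) (\<lambda>j. p j - cnj (A k j) * p k / cnj (A k k)) (\<lambda>i. q i - A i k * q k / A k k) v"
proof -
  let ?P = "cnj (p k) - (\<Sum>i\<in>I. cnj (v i) * A i k)"
  let ?Q = "q k - (\<Sum>j\<in>I. A k j * v j)"
  have a0: "A k k \<noteq> 0" using a by auto
  have eq: "gi (insert k I) A p q (v(k:=t)) = exp (- A k k * (cnj t * t) + ?P * t + ?Q * cnj t) * gi I A p q v" for t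
    by (rule gi_split[OF fin k])
  show "integrable lborel (\<lambda>t. gi (insert k I) A p q (v(k:=t)))"
    unfolding eq by (intro integrable_mult_left G1(1)[where a="A k k", OF a])
  have "(LINT t|lborel. gi (insert k I) A p q (v(k:=t))) = (LINT t|lborel. exp (- A k k * (cnj t * t) + ?P * t + ?Q * cnj t)) * gi I A p q v"
    unfolding eq by simp
  also have "\<dots> = pi / A k k * (exp (?P * ?Q / A k k) * gi I A p q v)"
    unfolding G1(2)[where a="A k k", OF a] by simp
  also have "\<dots> = pi / A k k * (exp (cnj (p k) * q k / A k k) *
         gi I (schur A k) (\<lambda>j. p j - cnj (A k j) * p k / cnj (A k k)) (\<lambda>i. q i - A i k * q k / A k k) v)"
    by (simp only: gi_step[where A=A and k=k, OF a0])
  finally show "(LINT t|lborel. gi (insert k I) A p q (v(k:=t))) =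
         pi / A k k * exp (cnj (p k) * q k / A k k) *
         gi I (schur A k) (\<lambda>j. p j - cnj (A k j) * p k / cnj (A k k)) (\<lambda>i. q i - A i k * q k / A k k) v"
    by (simp only: mult.assoc)
qed

lemma gi_int:
  assumes "finite I" "posH I A"
  shows "integrable (MI I) (gi I A p q)"
  using assms
proof (induction I arbitrary: A p q rule: finite_induct)
  case empty
  show ?case by (simp add: gi_empty PiM_empty integrable_count_space)
next
  case (insert k I)
  define H where "H = hp A"
  define m where "m = (\<lambda>i. (p i + q i) / 2)"
  have PH: "posH (insert k I) H" using insert.prems by (simp add: H_def posH_hp)
  have h: "Re (H k k) > 0" using posH_diag[OF _ PH] insert.hyps by simp
  define S where "S = schur H k"
  define m1 where "m1 = (\<lambda>j. m j - cnj (H k j) * m k / cnj (H k k))"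
  define m2 where "m2 = (\<lambda>i. m i - H i k * m k / H k k)"
  define C where "C = pi / H k k * exp (cnj (m k) * m k / H k k)"
  have PS: "posH I S" unfolding S_def by (rule posH_schur[OF insert.hyps PH])
  have IS: "integrable (MI I) (gi I S m1 m2)" by (rule insert.IH[OF PS])
  have ghp: "gi J H m m w = of_real (norm (gi J A p q w))" for J w
    unfolding H_def m_def by (rule gi_hp)
  have meas: "gi (insert k I) A p q \<in> borel_measurable (MI (insert k I))" by (rule gi_meas) simp
  have "(\<integral>\<^sup>+w. ennreal (norm (gi (insert k I) A p q w)) \<partial>MI (insert k I))
      = (\<integral>\<^sup>+v. (\<integral>\<^sup>+t. ennreal (norm (gi (insert k I) A p q (v(k:=t)))) \<partial>lborel) \<partial>MI I)"
    by (rule lbp.product_nn_integral_insert[OF insert.hyps]) (use meas in measurable)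
  also have "\<dots> = (\<integral>\<^sup>+v. ennreal (norm C * norm (gi I S m1 m2 v)) \<partial>MI I)"
  proof (rule nn_integral_cong)
    fix v :: "'a \<Rightarrow> complex"
    have "(\<integral>\<^sup>+t. ennreal (norm (gi (insert k I) A p q (v(k:=t)))) \<partial>lborel)
        = (\<integral>\<^sup>+t. ennreal (norm (gi (insert k I) H m m (v(k:=t)))) \<partial>lborel)"
      by (intro nn_integral_cong) (simp add: ghp)
    also have "\<dots> = ennreal (norm (LINT t|lborel. gi (insert k I) H m m (v(k:=t))))"
      by (rule nn_norm_integral[OF inner_gauss(1)[where A=H and k=k, OF insert.hyps h]]) (auto simp: ghp)
    also have "(LINT t|lborel. gi (insert k I) H m m (v(k:=t))) = C * gi I S m1 m2 v"
      unfolding inner_gauss(2)[where A=H and k=k, OF insert.hyps h] C_def S_def m1_def m2_def ..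
    finally show "(\<integral>\<^sup>+t. ennreal (norm (gi (insert k I) A p q (v(k:=t)))) \<partial>lborel) = ennreal (norm C * norm (gi I S m1 m2 v))"
      by (simp only: norm_mult)
  qed
  also have "\<dots> = ennreal (norm C) * (\<integral>\<^sup>+v. ennreal (norm (gi I S m1 m2 v)) \<partial>MI I)"
  proof -
    have [measurable]: "gi I S m1 m2 \<in> borel_measurable (MI I)" by (rule gi_meas) simp
    show ?thesis by (subst nn_integral_cmult[symmetric]) (auto simp: ennreal_mult)
  qed
  also have "\<dots> < \<infinity>"
    using IS unfolding integrable_iff_bounded by (simp add: ennreal_mult_less_top)
  finally show ?case unfolding integrable_iff_bounded using meas by simp
qed

definition pad :: "'n::finite set \<Rightarrow> ('n \<Rightarrow> 'n \<Rightarrow> complex) \<Rightarrow> complex^'n^'n" where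
  "pad I A = (\<chi> i j. if i \<in> I \<and> j \<in> I then A i j else if i = j then 1 else 0)"

lemma row_mat1: "row r (mat 1 :: complex^'n::finite^'n) = axis r 1"
  by (simp add: row_def mat_def axis_def vec_eq_iff)

lemma det_row_modify:
  fixes B :: "complex^'n::finite^'n"
  assumes oth: "\<And>r. r \<noteq> k \<Longrightarrow> B$r = axis r 1"
    and rk: "B$k = axis k 1 + (\<Sum>j\<in>I. d j *s axis j 1)" and k: "k \<notin> I"
  shows "det B = 1"
proof -
  define x :: "complex^'n" where "x = (\<Sum>j\<in>I. d j *s axis j 1)"
  have B: "B = (\<chi> r. if r = k then row k (mat 1) + x else row r (mat 1))"
    using oth rk by (auto simp: vec_eq_iff row_mat1 x_def)
  have "x \<in> vec.span {row j (mat 1 :: complex^'n^'n) |j. j \<noteq> k}"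
    unfolding x_def
  proof (intro vec.span_sum vec.span_scale vec.span_base)
    fix j assume "j \<in> I"
    then show "axis j 1 \<in> {row j (mat 1 :: complex^'n^'n) |j. j \<noteq> k}" using k by (auto simp: row_mat1)
  qed
  then have "det B = det (mat 1 :: complex^'n^'n)" unfolding B by (rule det_row_span)
  then show ?thesis by simp
qed

lemma rowop_mult:
  fixes M :: "complex^'n::finite^'n"
  shows "(\<chi> i j. (if i = j then 1 else 0) + (if i \<in> I \<and> j = k then c i else 0)) ** M
       = (\<chi> i j. M$i$j + (if i \<in> I then c i * M$k$j else 0))"
proof -
  have e: "((if i = l then 1 else 0) + (if i \<in> I \<and> l = k then c i else 0)) * M$l$j
      = (if l = i then M$i$j else 0) + (if l = k then (if i \<in> I then c i * M$k$j else 0) else 0)" for i l j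
    by (auto simp: algebra_simps)
  show ?thesis
    by (simp add: matrix_matrix_mult_def vec_eq_iff e sum.distrib)
qed

lemma colop_mult:
  fixes M :: "complex^'n::finite^'n"
  shows "M ** (\<chi> i j. (if i = j then 1 else 0) + (if i = k \<and> j \<in> I then d j else 0))
       = (\<chi> i j. M$i$j + (if j \<in> I then M$i$k * d j else 0))"
proof -
  have e: "M$i$l * ((if l = j then 1 else 0) + (if l = k \<and> j \<in> I then d j else 0))
      = (if l = j then M$i$j else 0) + (if l = k then (if j \<in> I then M$i$k * d j else 0) else 0)" for i l j
    by (auto simp: algebra_simps)
  show ?thesis
    by (simp add: matrix_matrix_mult_def vec_eq_iff e sum.distrib)
qed

lemma det_rowop: assumes "k \<notin> I"
  shows "det ((\<chi> i j. (if i = j then 1 else 0) + (if i \<in> I \<and> j = k then c i else 0)) :: complex^'n::finite^'n) = 1"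
proof -
  let ?L = "(\<chi> i j. (if i = j then 1 else 0) + (if i \<in> I \<and> j = k then c i else 0)) :: complex^'n^'n"
  have "det (transpose ?L) = 1"
  proof (rule det_row_modify[where k=k and I=I and d=c])
    show "(transpose ?L)$r = axis r 1" if "r \<noteq> k" for r
      using that by (auto simp: transpose_def axis_def vec_eq_iff)
    show "(transpose ?L)$k = axis k 1 + (\<Sum>j\<in>I. c j *s axis j 1)"
      using assms by (auto simp: transpose_def axis_def vec_eq_iff sum.delta if_distrib cong: if_cong)
  qed (rule assms)
  then show ?thesis by simp
qed

lemma det_colop: assumes "k \<notin> I"
  shows "det ((\<chi> i j. (if i = j then 1 else 0) + (if i = k \<and> j \<in> I then d j else 0)) :: complex^'n::finite^'n) = 1"
proof (rule det_row_modify[where k=k and I=I and d=d])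
  show "(\<chi> i j. (if i = j then 1 else 0) + (if i = k \<and> j \<in> I then d j else 0) :: complex^'n^'n)$r = axis r 1" if "r \<noteq> k" for r
    using that by (auto simp: axis_def vec_eq_iff)
  show "(\<chi> i j. (if i = j then 1 else 0) + (if i = k \<and> j \<in> I then d j else 0) :: complex^'n^'n)$k = axis k 1 + (\<Sum>j\<in>I. d j *s axis j 1)"
    using assms by (auto simp: axis_def vec_eq_iff sum.delta if_distrib cong: if_cong)
qed (rule assms)

lemma diag_mult:
  fixes P :: "complex^'n::finite^'n"
  shows "(\<chi> i j. if i = j then e i else 0) ** P = (\<chi> i j. e i * P$i$j)"
proof -
  have x: "(if i = l then e i else 0) * P$l$j = (if l = i then e i * P$i$j else 0)" for i l j by auto
  show ?thesis by (simp add: matrix_matrix_mult_def vec_eq_iff x)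
qed

lemma det_pad_insert:
  fixes A :: "'n::finite \<Rightarrow> 'n \<Rightarrow> complex"
  assumes k: "k \<notin> I" and a: "A k k \<noteq> 0"
  shows "det (pad (insert k I) A) = A k k * det (pad I (schur A k))"
proof -
  define c where "c i = - A i k / A k k" for i
  define d where "d j = - A k j / A k k" for j
  let ?L = "(\<chi> i j. (if i = j then 1 else 0) + (if i \<in> I \<and> j = k then c i else 0)) :: complex^'n^'n"
  let ?U = "(\<chi> i j. (if i = j then 1 else 0) + (if i = k \<and> j \<in> I then d j else 0)) :: complex^'n^'n"
  let ?D = "(\<chi> i j. if i = j then (if i = k then A k k else 1) else 0) :: complex^'n^'n"
  let ?M = "pad (insert k I) A"
  have eq: "?L ** ?M ** ?U = ?D ** pad I (schur A k)"
    unfolding rowop_mult colop_mult diag_mult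
    using k a by (auto simp: vec_eq_iff pad_def schur_def c_def d_def field_simps)
  have "det (?L ** ?M ** ?U) = det ?M"
    using det_rowop[OF k, of c] det_colop[OF k, of d] by (simp add: det_mul)
  moreover have "det (?D ** pad I (schur A k)) = A k k * det (pad I (schur A k))"
  proof -
    have "det ?D = (\<Prod>i\<in>UNIV. if i = k then A k k else 1)"
      by (subst det_diagonal) auto
    also have "\<dots> = A k k" by (simp add: prod.delta)
    finally show ?thesis by (simp add: det_mul)
  qed
  ultimately show ?thesis using eq by simp
qed

lemma gi_val:
  fixes A :: "'n::finite \<Rightarrow> 'n \<Rightarrow> complex"
  assumes "finite I" "posH I A" "\<forall>i\<in>I. (\<Sum>j\<in>I. A i j * y j) = q i"
  shows "(LINT v|MI I. gi I A p q v) = pi ^ card I / det (pad I A) * exp (LF I p y)"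
  using assms
proof (induction I arbitrary: A p q rule: finite_induct)
  case empty
  have "pad {} A = mat 1" by (simp add: pad_def mat_def vec_eq_iff)
  then show ?case
    by (simp add: gi_empty PiM_empty LF_def)
next
  case (insert k I)
  have a: "Re (A k k) > 0" using posH_diag[OF _ insert.prems(1)] insert.hyps by simp
  then have a0: "A k k \<noteq> 0" by auto
  define S where "S = schur A k"
  define p1 where "p1 = (\<lambda>j. p j - cnj (A k j) * p k / cnj (A k k))"
  define q1 where "q1 = (\<lambda>i. q i - A i k * q k / A k k)"
  define C where "C = pi / A k k * exp (cnj (p k) * q k / A k k)"
  have PS: "posH I S" unfolding S_def by (rule posH_schur[OF insert.hyps insert.prems(1)])
  have rowk: "(\<Sum>j\<in>I. A k j * y j) = q k - A k k * y k"
    using insert.prems(2) insert.hyps by (simp add: sum.insert algebra_simps)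
  have rowi: "(\<Sum>j\<in>I. A i j * y j) = q i - A i k * y k" if "i \<in> I" for i
    using insert.prems(2) insert.hyps that by (simp add: sum.insert algebra_simps)
  have Sy: "\<forall>i\<in>I. (\<Sum>j\<in>I. S i j * y j) = q1 i"
  proof
    fix i assume i: "i \<in> I"
    have "(\<Sum>j\<in>I. S i j * y j) = (\<Sum>j\<in>I. A i j * y j) - A i k / A k k * (\<Sum>j\<in>I. A k j * y j)"
      unfolding S_def schur_def by (simp add: sum_subtractf sum_distrib_left algebra_simps)
    also have "\<dots> = q1 i" unfolding rowk rowi[OF i] q1_def using a0 by (simp add: field_simps)
    finally show "(\<Sum>j\<in>I. S i j * y j) = q1 i" .
  qed
  have IH: "(LINT v|MI I. gi I S p1 q1 v) = pi ^ card I / det (pad I S) * exp (LF I p1 y)"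
    by (rule insert.IH[OF PS Sy])
  have int: "integrable (MI (insert k I)) (gi (insert k I) A p q)"
    by (rule gi_int) (use insert in auto)
  have "(LINT w|MI (insert k I). gi (insert k I) A p q w) = (LINT v|MI I. LINT t|lborel. gi (insert k I) A p q (v(k:=t)))"
    by (rule lbp.product_integral_insert[OF insert.hyps int])
  also have "\<dots> = (LINT v|MI I. C * gi I S p1 q1 v)"
    unfolding inner_gauss(2)[where A=A and k=k, OF insert.hyps a] C_def S_def p1_def q1_def ..
  also have "\<dots> = C * (pi ^ card I / det (pad I S) * exp (LF I p1 y))"
    by (simp add: IH)
  also have "\<dots> = pi ^ card (insert k I) / det (pad (insert k I) A) * exp (LF (insert k I) p y)"
  proof -
    have d: "det (pad (insert k I) A) = A k k * det (pad I S)"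
      unfolding S_def by (rule det_pad_insert[where A=A and k=k, OF insert.hyps(2) a0])
    have l1: "LF (insert k I) p y = cnj (p k) * y k + LF I p y"
      using insert.hyps by (simp add: LF_def sum.insert)
    have l2: "LF I p1 y = LF I p y - cnj (p k) / A k k * (q k - A k k * y k)"
      unfolding p1_def LF_p'[where A=A and k=k, OF a0] rowk ..
    have ex: "cnj (p k) * q k / A k k + LF I p1 y = LF (insert k I) p y"
      unfolding l1 l2 using a0 by (simp add: field_simps)
    have cI: "card (insert k I) = Suc (card I)" using insert.hyps by simp
    show ?thesis
      unfolding d C_def ex[symmetric] exp_add cI using a0
      by (simp add: divide_simps)
  qed
  finally show ?case .
qed

lemma prod_Basis_vec:
  fixes f :: "'a::euclidean_space^'n::finite \<Rightarrow> 'c::comm_monoid_mult"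
  shows "(\<Prod>b\<in>Basis. f b) = (\<Prod>i\<in>UNIV. \<Prod>u\<in>Basis. f (axis i u))"
proof -
  have "(\<Prod>b\<in>(Basis :: ('a^'n) set). f b) = (\<Prod>b\<in>(\<Union>i. axis i ` Basis). f b)"
    by (simp add: Basis_vec_def image_def) (intro prod.cong refl, auto)
  also have "\<dots> = (\<Prod>i\<in>UNIV. \<Prod>b\<in>axis i ` Basis. f b)"
    by (rule prod.UNION_disjoint) (auto simp: axis_eq_axis)
  also have "\<dots> = (\<Prod>i\<in>UNIV. \<Prod>u\<in>Basis. f (axis i u))"
    by (intro prod.cong refl, subst prod.reindex) (auto simp: inj_on_def axis_eq_axis)
  finally show ?thesis .
qed

lemma vec_lambda_sum_axis: "vec_lambda f = (\<Sum>i\<in>UNIV. axis i (f i) :: 'a::comm_ring_1^'n::finite)"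
  by (simp add: vec_eq_iff axis_def sum.delta if_distrib cong: if_cong)

lemma continuous_axis: "continuous_on UNIV (axis i :: 'a::real_normed_vector \<Rightarrow> 'a^'n::finite)"
  unfolding axis_def
proof (intro continuous_on_vec_lambda)
  fix j :: 'n show "continuous_on UNIV (\<lambda>x::'a. if j = i then x else 0)"
    by (cases "j = i") (simp_all add: continuous_on_id continuous_on_const)
qed

lemma vec_lambda_meas: "(vec_lambda :: ('n::finite \<Rightarrow> complex) \<Rightarrow> complex^'n) \<in> borel_measurable (MI UNIV)"
proof -
  have ax[measurable]: "axis i \<in> borel_measurable (borel :: complex measure) " for i :: 'n
    by (intro borel_measurable_continuous_onI continuous_axis)
  have c[measurable]: "(\<lambda>v. v i) \<in> borel_measurable (MI UNIV)" for i :: 'n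
    using measurable_component_singleton[of i UNIV "\<lambda>_. lborel :: complex measure"] by auto
  have "(\<lambda>f. \<Sum>i\<in>UNIV. axis i (f i) :: complex^'n) \<in> borel_measurable (MI UNIV)"
    by measurable
  then show ?thesis
    by (subst (asm) vec_lambda_sum_axis[symmetric])
qed

lemma mem_box_vec: "x \<in> box l u \<longleftrightarrow> (\<forall>i. x$i \<in> box (l$i) (u$i))"
  for x l u :: "'a::euclidean_space^'n::finite"
  by (auto simp: mem_box Basis_vec_def inner_axis)

lemma lborel_vec_eq: "(lborel :: (complex^'n::finite) measure) = distr (MI UNIV) borel vec_lambda"
proof (rule lborel_eqI)
  fix l u :: "complex^'n" assume le: "\<And>b. b \<in> Basis \<Longrightarrow> l \<bullet> b \<le> u \<bullet> b"
  have lei: "\<forall>c\<in>Basis. l$i \<bullet> c \<le> u$i \<bullet> c" for i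
  proof
    fix c :: complex assume "c \<in> Basis"
    then have "axis i c \<in> (Basis :: (complex^'n) set)" by (auto simp: Basis_vec_def)
    from le[OF this] show "l$i \<bullet> c \<le> u$i \<bullet> c" by (simp add: inner_axis)
  qed
  have pre: "vec_lambda -` box l u \<inter> space (MI UNIV) = (\<Pi>\<^sub>E i\<in>UNIV. box (l$i) (u$i))"
    by (auto simp: space_PiM mem_box_vec PiE_def Pi_def)
  have "emeasure (distr (MI UNIV) borel vec_lambda) (box l u) = emeasure (MI UNIV) (\<Pi>\<^sub>E i\<in>UNIV. box (l$i) (u$i))"
    by (subst emeasure_distr[OF vec_lambda_meas]) (auto simp: pre)
  also have "\<dots> = (\<Prod>i\<in>UNIV. emeasure lborel (box (l$i) (u$i)))"
    by (rule lbp.emeasure_PiM) auto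
  also have "\<dots> = (\<Prod>i\<in>UNIV. ennreal (\<Prod>c\<in>Basis. (u$i - l$i) \<bullet> c))"
    using lei by (intro prod.cong refl) (simp add: emeasure_lborel_box_eq)
  also have "\<dots> = ennreal (\<Prod>i\<in>UNIV. \<Prod>c\<in>Basis. (u$i - l$i) \<bullet> c)"
    using lei by (intro prod_ennreal) (auto intro!: prod_nonneg simp: inner_diff_left)
  also have "(\<Prod>i\<in>UNIV. \<Prod>c\<in>Basis. (u$i - l$i) \<bullet> c) = (\<Prod>b\<in>Basis. (u - l) \<bullet> b)"
    by (simp add: prod_Basis_vec inner_axis)
  finally show "emeasure (distr (MI UNIV) borel vec_lambda) (box l u) = (\<Prod>b\<in>Basis. (u - l) \<bullet> b)" .
qed simp

lemma herm_QF: "herm w (Z *v w) = QF UNIV (\<lambda>i j. Z$i$j) (vec_nth w)"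
  unfolding herm_def QF_def by (simp add: matrix_vector_mult_def sum_distrib_left mult.assoc)

lemma herm_LF: "herm a b = LF UNIV (vec_nth a) (vec_nth b)"
  unfolding herm_def LF_def ..

lemma herm_diff_left: "herm (a - b) c = herm a c - herm b c"
  unfolding herm_def by (simp add: sum_subtractf ring_distribs)

lemma herm_diff_right: "herm a (b - c) = herm a b - herm a c"
  unfolding herm_def by (simp add: sum_subtractf ring_distribs)

lemma herm_add_right: "herm a (b + c) = herm a b + herm a c"
  unfolding herm_def by (simp add: sum.distrib ring_distribs)

lemma herm_cnj: "cnj (herm a b) = herm b a"
  unfolding herm_def by (simp add: mult.commute)

lemma sgnmat_mv: "(sgnmat P *v v)$i = (if i \<in> P then 1 else -1) * v$i"
proof -
  have "(sgnmat P *v v)$i = (\<Sum>j\<in>UNIV. (sgnmat P)$i$j * v$j)" by (simp add: matrix_vector_mult_def)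
  also have "\<dots> = (\<Sum>j\<in>UNIV. if j = i then (if i \<in> P then 1 else -1) * v$i else 0)"
    by (intro sum.cong refl) (auto simp: sgnmat_def)
  also have "\<dots> = (if i \<in> P then 1 else -1) * v$i" by simp
  finally show ?thesis .
qed

lemma herm_sgn: "herm (sgnmat P *v v) u = herm v (sgnmat P *v u)"
  unfolding herm_def sgnmat_mv by (intro sum.cong refl) auto

lemma herm_adj: "herm v (adj X *v v) = cnj (herm v (X *v v))"
proof -
  have "herm v (adj X *v v) = (\<Sum>i\<in>UNIV. \<Sum>j\<in>UNIV. cnj (v$i) * cnj (X$j$i) * v$j)"
    unfolding herm_def adj_def matrix_vector_mult_def by (simp add: sum_distrib_left mult.assoc)
  also have "\<dots> = (\<Sum>j\<in>UNIV. \<Sum>i\<in>UNIV. cnj (v$i) * cnj (X$j$i) * v$j)" by (rule sum.swap)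
  also have "\<dots> = cnj (herm v (X *v v))"
    unfolding herm_def matrix_vector_mult_def by (simp add: sum_distrib_left ac_simps)
  finally show ?thesis .
qed

lemma herm_scaleR_mat: "herm v ((c *\<^sub>R M) *v w) = of_real c * herm v (M *v w)"
  unfolding herm_def matrix_vector_mult_def vec_lambda_beta
  by (simp only: vector_scaleR_component) (simp add: scaleR_conv_of_real sum_distrib_left ac_simps)

lemma herm_add_mat: "herm v ((M + N) *v w) = herm v (M *v w) + herm v (N *v w)"
  by (simp add: matrix_vector_mult_add_rdistrib herm_add_right)

lemma posdef_Re:
  assumes "posdef ((1/2) *\<^sub>R (X + adj X))" "v \<noteq> 0"
  shows "Re (herm v (X *v v)) > 0"
proof -
  have "Re (herm v (((1/2) *\<^sub>R (X + adj X)) *v v)) > 0" using assms unfolding posdef_def by blast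
  also have "herm v (((1/2) *\<^sub>R (X + adj X)) *v v) = of_real (1/2) * (herm v (X *v v) + cnj (herm v (X *v v)))"
    by (simp add: herm_scaleR_mat herm_add_mat herm_adj)
  finally show ?thesis by simp
qed

lemma Im_eq: "- \<i> * complex_of_real (Im z) = - (z - cnj z) / 2"
  by (simp add: complex_diff_cnj)

lemma herm_mv: "herm u (Z *v v) = (\<Sum>j\<in>UNIV. (\<Sum>i\<in>UNIV. cnj (u$i) * Z$i$j) * v$j)"
proof -
  have "herm u (Z *v v) = (\<Sum>i\<in>UNIV. \<Sum>j\<in>UNIV. cnj (u$i) * Z$i$j * v$j)"
    unfolding herm_def matrix_vector_mult_def by (simp add: sum_distrib_left mult.assoc)
  also have "\<dots> = (\<Sum>j\<in>UNIV. \<Sum>i\<in>UNIV. cnj (u$i) * Z$i$j * v$j)" by (rule sum.swap)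
  also have "\<dots> = (\<Sum>j\<in>UNIV. (\<Sum>i\<in>UNIV. cnj (u$i) * Z$i$j) * v$j)" by (simp add: sum_distrib_right)
  finally show ?thesis .
qed

lemma QF_A2: "QF UNIV (\<lambda>i j. (X + Y)$i$j / 2) (vec_nth v) = (herm v (X *v v) + herm v (Y *v v)) / 2"
proof -
  have "QF UNIV (\<lambda>i j. (X + Y)$i$j / 2) (vec_nth v) = QF UNIV (\<lambda>i j. (X + Y)$i$j) (vec_nth v) / 2"
    unfolding QF_def by (simp add: sum_divide_distrib)
  also have "\<dots> = herm v ((X + Y) *v v) / 2" by (simp add: herm_QF)
  finally show ?thesis by (simp add: herm_add_mat)
qed

lemma LF_pp: "LF UNIV (\<lambda>j. (\<Sum>i\<in>UNIV. cnj ((X - S)$i$j) * u$i) / 2) (vec_nth v) = (herm u (X *v v) - herm u (S *v v)) / 2"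
proof -
  have "LF UNIV (\<lambda>j. (\<Sum>i\<in>UNIV. cnj ((X - S)$i$j) * u$i) / 2) (vec_nth v)
     = (\<Sum>j\<in>UNIV. ((\<Sum>i\<in>UNIV. cnj (u$i) * (X - S)$i$j) * v$j) / 2)"
    unfolding LF_def by (intro sum.cong refl) (simp add: ac_simps)
  also have "\<dots> = herm u ((X - S) *v v) / 2"
    unfolding herm_mv by (simp add: sum_divide_distrib)
  finally have "LF UNIV (\<lambda>j. (\<Sum>i\<in>UNIV. cnj ((X - S)$i$j) * u$i) / 2) (vec_nth v) = herm u ((X - S) *v v) / 2" .
  then show ?thesis by (simp add: matrix_vector_mult_diff_rdistrib herm_diff_right)
qed

lemma LF_qq: "LF UNIV (vec_nth v) (\<lambda>i. ((X + S) *v u)$i / 2) = (herm v (X *v u) + herm v (S *v u)) / 2"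
proof -
  have "LF UNIV (vec_nth v) (\<lambda>i. ((X + S) *v u)$i / 2) = herm v ((X + S) *v u) / 2"
    unfolding LF_def herm_def by (simp add: sum_divide_distrib)
  then show ?thesis by (simp add: herm_add_mat)
qed

lemma integrand_eq:
  fixes X Y :: "complex^'n::finite^'n" and P :: "'n set"
  defines "s \<equiv> sgnmat P"
  shows "gammaX P X (u - v) * gammaX P Y v * exp (- \<i> * complex_of_real (Im (herm u (s *v v))))
   = (det (X + s) * det (Y + s) * exp (- (1/2) * herm u (X *v u))) *
     gi UNIV (\<lambda>i j. (X + Y)$i$j / 2) (\<lambda>j. (\<Sum>i\<in>UNIV. cnj ((X - s)$i$j) * u$i) / 2) (\<lambda>i. ((X + s) *v u)$i / 2) (vec_nth v)"
proof -
  have c: "cnj (herm u (s *v v)) = herm v (s *v u)" unfolding s_def herm_cnj herm_sgn ..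
  have e1: "herm (u - v) (X *v (u - v)) = herm u (X *v u) - herm u (X *v v) - herm v (X *v u) + herm v (X *v v)"
    by (simp add: matrix_vector_mult_diff_distrib herm_diff_left herm_diff_right)
  let ?a1 = "- (1/2) * herm (u - v) (X *v (u - v))"
  let ?a2 = "- (1/2) * herm v (Y *v v)"
  let ?a3 = "- \<i> * complex_of_real (Im (herm u (s *v v)))"
  let ?a4 = "- (1/2) * herm u (X *v u)"
  let ?G = "gi UNIV (\<lambda>i j. (X + Y)$i$j / 2) (\<lambda>j. (\<Sum>i\<in>UNIV. cnj ((X - s)$i$j) * u$i) / 2) (\<lambda>i. ((X + s) *v u)$i / 2) (vec_nth v)"
  have "gammaX P X (u - v) * gammaX P Y v * exp ?a3 = det (X + s) * det (Y + s) * (exp ?a1 * exp ?a2 * exp ?a3)"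
    unfolding gammaX_def s_def by (simp add: ac_simps)
  also have "exp ?a1 * exp ?a2 * exp ?a3 = exp (?a1 + ?a2 + ?a3)" by (simp only: exp_add)
  also have "?a1 + ?a2 + ?a3 = ?a4 + (- QF UNIV (\<lambda>i j. (X + Y)$i$j / 2) (vec_nth v)
        + LF UNIV (\<lambda>j. (\<Sum>i\<in>UNIV. cnj ((X - s)$i$j) * u$i) / 2) (vec_nth v)
        + LF UNIV (vec_nth v) (\<lambda>i. ((X + s) *v u)$i / 2))"
    unfolding Im_eq c QF_A2 LF_pp LF_qq e1 by (simp add: field_simps)
  also have "exp (?a4 + (- QF UNIV (\<lambda>i j. (X + Y)$i$j / 2) (vec_nth v)
        + LF UNIV (\<lambda>j. (\<Sum>i\<in>UNIV. cnj ((X - s)$i$j) * u$i) / 2) (vec_nth v)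
        + LF UNIV (vec_nth v) (\<lambda>i. ((X + s) *v u)$i / 2))) = exp ?a4 * ?G"
    unfolding gi_def by (simp only: exp_add)
  finally show ?thesis by (simp add: ac_simps)
qed

lemma vn_vl[simp]: "vec_nth (vec_lambda f) = f"
  by (simp add: fun_eq_iff)

lemma vec_nth_meas[measurable]: "(\<lambda>x::'a::euclidean_space^'n::finite. x $ i) \<in> borel_measurable borel"
  by (intro borel_measurable_continuous_onI linear_continuous_on bounded_linear_vec_nth)

lemma gi_vec_meas: "(\<lambda>v::complex^'n::finite. gi UNIV A p q (vec_nth v)) \<in> borel_measurable borel"
  unfolding gi_def QF_def LF_def by measurable

lemma lborel_vec_integral:
  fixes F :: "complex^'n::finite \<Rightarrow> complex"
  assumes "F \<in> borel_measurable borel"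
  shows "integrable lborel F \<longleftrightarrow> integrable (MI UNIV) (\<lambda>f. F (vec_lambda f))"
    and "(LINT v|lborel. F v) = (LINT f|MI UNIV. F (vec_lambda f))"
proof -
  show "integrable lborel F \<longleftrightarrow> integrable (MI UNIV) (\<lambda>f. F (vec_lambda f))"
    by (subst lborel_vec_eq) (rule integrable_distr_eq[OF vec_lambda_meas assms])
  show "(LINT v|lborel. F v) = (LINT f|MI UNIV. F (vec_lambda f))"
    by (subst lborel_vec_eq) (rule integral_distr[OF vec_lambda_meas assms])
qed

lemma posH_sum:
  fixes f :: "'n::finite \<Rightarrow> complex"
  assumes "\<exists>i. f i \<noteq> 0"
  shows "(\<Sum>i\<in>UNIV. (cmod (f i))\<^sup>2) > 0"
proof -
  obtain i where i: "f i \<noteq> 0" using assms by blast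
  have "(cmod (f i))\<^sup>2 \<le> (\<Sum>i\<in>UNIV. (cmod (f i))\<^sup>2)"
    by (rule member_le_sum) auto
  moreover have "(cmod (f i))\<^sup>2 > 0" using i by simp
  ultimately show ?thesis by linarith
qed

lemma vol_norm_val: "vol_norm TYPE('n::finite) = (2 * pi) ^ CARD('n)"
proof -
  define A0 where "A0 = (\<lambda>i j::'n. if i = j then 1/2 else 0 :: complex)"
  have QA0: "QF UNIV A0 f = of_real ((\<Sum>i\<in>UNIV. (cmod (f i))\<^sup>2) / 2)" for f
  proof -
    have "QF UNIV A0 f = (\<Sum>i\<in>UNIV. \<Sum>j\<in>UNIV. if j = i then cnj (f i) * f i / 2 else 0)"
      unfolding QF_def A0_def by (intro sum.cong refl) auto
    also have "\<dots> = (\<Sum>i\<in>UNIV. cnj (f i) * f i / 2)" by simp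
    also have "\<dots> = (\<Sum>i\<in>UNIV. of_real ((cmod (f i))\<^sup>2) / 2)"
      by (intro sum.cong refl) (simp only: complex_norm_square mult.commute)
    also have "\<dots> = of_real ((\<Sum>i\<in>UNIV. (cmod (f i))\<^sup>2) / 2)"
      by (simp only: of_real_sum of_real_divide sum_divide_distrib of_real_numeral)
    finally show ?thesis .
  qed
  have eqF: "exp (- (1/2) * herm v v) = gi UNIV A0 (\<lambda>_. 0) (\<lambda>_. 0) (vec_nth v)" for v :: "complex^'n"
  proof -
    have "herm v v = (\<Sum>i\<in>UNIV. of_real ((cmod (v$i))\<^sup>2))"
      unfolding herm_def by (intro sum.cong refl) (simp only: complex_norm_square mult.commute)
    also have "\<dots> = of_real (\<Sum>i\<in>UNIV. (cmod (v$i))\<^sup>2)" by (simp only: of_real_sum)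
    finally have "herm v v = of_real (\<Sum>i\<in>UNIV. (cmod (v$i))\<^sup>2)" .
    then show ?thesis unfolding gi_def QA0 LF_def by simp
  qed
  have PA0: "posH UNIV A0" unfolding posH_def QA0 using posH_sum by auto
  have "vol_norm TYPE('n) = (LINT v|lborel. gi UNIV A0 (\<lambda>_. 0) (\<lambda>_. 0) (vec_nth v))"
    unfolding vol_norm_def eqF ..
  also have "\<dots> = (LINT f|MI UNIV. gi UNIV A0 (\<lambda>_. 0) (\<lambda>_. 0) f)"
    by (subst lborel_vec_integral(2)[OF gi_vec_meas]) simp
  also have "\<dots> = pi ^ card (UNIV :: 'n set) / det (pad UNIV A0) * exp (LF UNIV (\<lambda>_. 0) (\<lambda>_. 0))"
    using gi_val[where I=UNIV and A=A0 and y="\<lambda>_. 0" and q="\<lambda>_. 0" and p="\<lambda>_. 0"] PA0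
    by (simp add: A0_def LF_def)
  also have "det (pad UNIV A0) = (1/2) ^ CARD('n)"
  proof -
    have "det (pad UNIV A0) = (\<Prod>i\<in>UNIV. (pad UNIV A0)$i$i)"
      by (rule det_diagonal) (simp add: pad_def A0_def)
    then show ?thesis by (simp add: pad_def A0_def)
  qed
  finally show ?thesis by (simp add: LF_def power_divide field_simps power_mult_distrib)
qed

lemma det_mat_c: "det (mat c :: complex^'n::finite^'n) = c ^ CARD('n)"
proof -
  have "det (mat c :: complex^'n^'n) = (\<Prod>i\<in>UNIV. (mat c :: complex^'n^'n)$i$i)"
    by (rule det_diagonal) (simp add: mat_def)
  then show ?thesis by (simp add: mat_def)
qed

lemma pad_half: "pad UNIV (\<lambda>i j. (Z::complex^'n::finite^'n)$i$j / 2) = mat (1/2) ** Z"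
proof -
  have "(\<Sum>k\<in>UNIV. (if i = k then 1/2 else 0) * Z$k$j) = Z$i$j / 2" for i j
  proof -
    have "(\<Sum>k\<in>UNIV. (if i = k then 1/2 else 0) * Z$k$j) = (\<Sum>k\<in>UNIV. if k = i then Z$i$j / 2 else 0)"
      by (intro sum.cong refl) auto
    then show ?thesis by simp
  qed
  then show ?thesis by (simp add: pad_def matrix_matrix_mult_def mat_def vec_eq_iff)
qed

lemma herm_zero_right: "herm a 0 = 0"
  unfolding herm_def by simp

theorem mainTheorem14:
  fixes P :: "'n::finite set" and X Y :: "complex^'n^'n" and u :: "complex^'n"
  assumes "X \<in> zeta_plus P" and "Y \<in> zeta_plus P"
  shows "integrable (lborel :: (complex^'n) measure)
           (\<lambda>v. gammaX P X (u - v) * gammaX P Y v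
                 * exp (- \<i> * complex_of_real (Im (herm u (sgnmat P *v v)))))
    \<and> (LINT v|lborel. gammaX P X (u - v) * gammaX P Y v
                 * exp (- \<i> * complex_of_real (Im (herm u (sgnmat P *v v))))) / vol_norm TYPE('n)
      = gammaX P (circ P X Y) u"
proof -
  define s where "s = sgnmat P"
  define A2 where "A2 = (\<lambda>i j. (X + Y)$i$j / 2)"
  define p where "p = (\<lambda>j. (\<Sum>i\<in>UNIV. cnj ((X - s)$i$j) * u$i) / 2)"
  define q where "q = (\<lambda>i. ((X + s) *v u)$i / 2)"
  define K where "K = det (X + s) * det (Y + s) * exp (- (1/2) * herm u (X *v u))"
  define M where "M = matrix_inv (X + Y)"
  have pX: "posdef ((1/2) *\<^sub>R (X + adj X))" and pY: "posdef ((1/2) *\<^sub>R (Y + adj Y))"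
    using assms by (auto simp: zeta_plus_def)
  have ReXY: "Re (herm v ((X + Y) *v v)) > 0" if "v \<noteq> 0" for v
    using posdef_Re[OF pX that] posdef_Re[OF pY that] by (simp add: herm_add_mat)
  have PA: "posH UNIV A2"
    unfolding posH_def
  proof (intro allI impI)
    fix f :: "'n \<Rightarrow> complex" assume "\<exists>i\<in>UNIV. f i \<noteq> 0"
    then have nz: "vec_lambda f \<noteq> (0 :: complex^'n)" by (auto simp: vec_eq_iff)
    have e: "QF UNIV A2 f = herm (vec_lambda f) ((X + Y) *v vec_lambda f) / 2"
      using QF_A2[of X Y "vec_lambda f"] unfolding A2_def by (simp add: herm_add_mat)
    have "Re (QF UNIV A2 f) = Re (herm (vec_lambda f) ((X + Y) *v vec_lambda f)) / 2"
      unfolding e by simp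
    then show "Re (QF UNIV A2 f) > 0" using ReXY[OF nz] by simp
  qed
  have inv: "(X + Y) ** M = mat 1 \<and> M ** (X + Y) = mat 1"
  proof -
    have "\<forall>x. (X + Y) *v x = 0 \<longrightarrow> x = 0"
    proof (intro allI impI)
      fix x :: "complex^'n" assume "(X + Y) *v x = 0"
      then have "Re (herm x ((X + Y) *v x)) = 0" by (simp add: herm_zero_right)
      then show "x = 0" using ReXY by force
    qed
    then have "invertible (X + Y)" by (simp add: invertible_left_inverse matrix_left_invertible_ker)
    then show ?thesis unfolding M_def matrix_inv_def invertible_def by (rule someI_ex)
  qed
  define w where "w = M *v ((X + s) *v u)"
  have Xw: "(X + Y) *v w = (X + s) *v u"
    unfolding w_def by (simp add: matrix_vector_mul_assoc matrix_mul_assoc inv)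
  have Feq: "gammaX P X (u - v) * gammaX P Y v * exp (- \<i> * complex_of_real (Im (herm u (sgnmat P *v v))))
      = K * gi UNIV A2 p q (vec_nth v)" for v
    unfolding K_def A2_def p_def q_def s_def by (rule integrand_eq)
  have Fm: "(\<lambda>v. K * gi UNIV A2 p q (vec_nth v)) \<in> borel_measurable borel"
    using gi_vec_meas by measurable
  have intg: "integrable (MI UNIV) (gi UNIV A2 p q)" by (rule gi_int) (use PA in auto)
  have I1: "integrable lborel (\<lambda>v::complex^'n. K * gi UNIV A2 p q (vec_nth v))"
    unfolding lborel_vec_integral(1)[OF Fm] using intg by simp
  have I2: "(LINT v|lborel. K * gi UNIV A2 p q (vec_nth v)) = K * (LINT f|MI UNIV. gi UNIV A2 p q f)"
    unfolding lborel_vec_integral(2)[OF Fm] by simp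
  have sol: "\<forall>i\<in>UNIV. (\<Sum>j\<in>UNIV. A2 i j * vec_nth w j) = q i"
  proof
    fix i
    have "(\<Sum>j\<in>UNIV. A2 i j * vec_nth w j) = ((X + Y) *v w)$i / 2"
      unfolding A2_def by (simp add: matrix_vector_mult_def sum_divide_distrib)
    then show "(\<Sum>j\<in>UNIV. A2 i j * vec_nth w j) = q i" unfolding Xw q_def by simp
  qed
  have V: "(LINT f|MI UNIV. gi UNIV A2 p q f) = pi ^ card (UNIV::'n set) / det (pad UNIV A2) * exp (LF UNIV p (vec_nth w))"
    by (rule gi_val[OF _ PA sol]) simp
  have dA2: "det (pad UNIV A2) = (1/2) ^ CARD('n) * det (X + Y)"
    unfolding A2_def pad_half det_mul det_mat_c ..
  have LFp: "LF UNIV p (vec_nth w) = herm u ((X - s) *v w) / 2"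
    unfolding p_def LF_pp by (simp add: matrix_vector_mult_diff_rdistrib herm_diff_right)
  have dM: "det (X + Y) * det M = 1"
    using inv by (metis det_I det_mul)
  have circ_u: "circ P X Y *v u = X *v u - (X - s) *v w"
  proof -
    have "circ P X Y *v u = (Y + s) *v w - s *v u"
      unfolding circ_def s_def[symmetric] w_def M_def[symmetric]
      by (simp add: matrix_vector_mult_diff_rdistrib matrix_vector_mul_assoc[symmetric])
    also have "(Y + s) *v w = (X + s) *v u - (X - s) *v w"
      using Xw by (simp add: matrix_vector_mult_add_rdistrib matrix_vector_mult_diff_rdistrib algebra_simps)
    finally show ?thesis by (simp add: matrix_vector_mult_add_rdistrib algebra_simps)
  qed
  have dcirc: "det (circ P X Y + s) = det (Y + s) * det M * det (X + s)"
    unfolding circ_def s_def[symmetric] M_def[symmetric] by (simp add: det_mul)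
  have RHS: "gammaX P (circ P X Y) u = det (Y + s) * det M * det (X + s) *
       (exp (- (1/2) * herm u (X *v u)) * exp (herm u ((X - s) *v w) / 2))"
    unfolding gammaX_def s_def[symmetric] dcirc circ_u herm_diff_right
    by (simp add: exp_add[symmetric] algebra_simps)
  have dXY: "det (X + Y) \<noteq> 0" using dM by auto
  have detM: "det M = 1 / det (X + Y)" using dM dXY by (simp add: field_simps)
  show ?thesis
  proof
    show "integrable lborel (\<lambda>v. gammaX P X (u - v) * gammaX P Y v * exp (- \<i> * complex_of_real (Im (herm u (sgnmat P *v v)))))"
      unfolding Feq by (rule I1)
    have "(LINT v|lborel. gammaX P X (u - v) * gammaX P Y v * exp (- \<i> * complex_of_real (Im (herm u (sgnmat P *v v)))))
        = K * (pi ^ CARD('n) / ((1/2) ^ CARD('n) * det (X + Y)) * exp (herm u ((X - s) *v w) / 2))"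
      unfolding Feq I2 V dA2 LFp by simp
    then show "(LINT v|lborel. gammaX P X (u - v) * gammaX P Y v * exp (- \<i> * complex_of_real (Im (herm u (sgnmat P *v v))))) / vol_norm TYPE('n)
      = gammaX P (circ P X Y) u"
      unfolding vol_norm_val RHS K_def detM using dXY
      by (simp add: field_simps power_mult_distrib power_divide)
  qed
qed

end
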